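(* Let $(\mathcal{X},d)$ be a finite metric space $\mathcal{X}=\{x_0,x_1,\dots,x_n\}$ ($n\ge 1$, the $x_i$ pairwise distinct), and let $(\mathcal{Y},\|\cdot\|)$ be a non-trivial, strictly convex real Banach space. Then the set of extreme points of the convex set $\operatorname{Lip}^1_0\subset\mathcal{Y}^{n+1}$ is exactly $\mathcal{E}$, i.e. $\operatorname{ext}(\operatorname{Lip}^1_0)=\mathcal{E}$.
   Context: $\operatorname{Lip}^1_0$ denotes the set of all $y=(y_0,\dots,y_n)\in\mathcal{Y}^{n+1}$ with $y_0=0$ and $\|y_i-y_j\|\le d(x_i,x_j)$ for all $i,j\in\{0,1,\dots,n\}$. An extreme point of a convex set $C$ is a point $y\in C$ such that $y=\lambda y^1+(1-\lambda)y^2$ with $y^1,y^2\in C$, $\lambda\in(0,1)$ implies $y^1=y^2=y$; $\operatorname{ext}(C)$ is the set of extreme points. $\mathcal{E}$ is the set of all $y\in\operatorname{Lip}^1_0$ such that for every $i\in\{1,\dots,n\}$ there exist $k\ge1$ and indices $0=i_0,i_1,\dots,i_k=i$ in $\{0,\dots,n\}$ with $\|y_{i_{j+1}}-y_{i_j}\|=d(x_{i_j},x_{i_{j+1}})$ for every $j=0,\dots,k-1$. *)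

theory Defs
  imports "HOL-Analysis.Analysis"
begin

definition strictly_convex_space :: "'b::real_normed_vector itself \<Rightarrow> bool" where
  "strictly_convex_space _ \<longleftrightarrow>
     (\<forall>u v::'b. norm u = 1 \<and> norm v = 1 \<and> u \<noteq> v \<longrightarrow> norm ((1/2) *\<^sub>R (u + v)) < 1)"

text \<open>Elements of Y^(n+1) are represented as functions nat => Y that vanish outside {0..n}.\<close>
definition Lip10 :: "nat \<Rightarrow> (nat \<Rightarrow> 'a::metric_space) \<Rightarrow> (nat \<Rightarrow> 'b::real_normed_vector) set" where
  "Lip10 n x = {y. y 0 = 0 \<and> (\<forall>i>n. y i = 0) \<and>
      (\<forall>i\<le>n. \<forall>j\<le>n. norm (y i - y j) \<le> dist (x i) (x j))}"

definition ext_pts :: "(nat \<Rightarrow> 'b::real_vector) set \<Rightarrow> (nat \<Rightarrow> 'b) set" where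
  "ext_pts C = {y \<in> C. \<forall>y1\<in>C. \<forall>y2\<in>C. \<forall>l::real. 0 < l \<and> l < 1 \<and>
      y = (\<lambda>i. l *\<^sub>R y1 i + (1 - l) *\<^sub>R y2 i) \<longrightarrow> y1 = y \<and> y2 = y}"

definition E_set :: "nat \<Rightarrow> (nat \<Rightarrow> 'a::metric_space) \<Rightarrow> (nat \<Rightarrow> 'b::real_normed_vector) set" where
  "E_set n x = {y \<in> Lip10 n x. \<forall>i\<in>{1..n}. \<exists>k\<ge>1. \<exists>p::nat \<Rightarrow> nat.
      p 0 = 0 \<and> p k = i \<and> (\<forall>j\<le>k. p j \<le> n) \<and>
      (\<forall>j<k. norm (y (p (Suc j)) - y (p j)) = dist (x (p j)) (x (p (Suc j))))}"

end

theory Submission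
  imports Defs
begin

definition reach :: "nat \<Rightarrow> (nat \<Rightarrow> 'a::metric_space) \<Rightarrow> (nat \<Rightarrow> 'b::real_normed_vector) \<Rightarrow> nat \<Rightarrow> bool" where
"reach n x y i \<longleftrightarrow> (\<exists>k p. p 0 = 0 \<and> p k = i \<and> (\<forall>j\<le>k. p j \<le> n) \<and>
   (\<forall>j<k. norm (y (p (Suc j)) - y (p j)) = dist (x (p j)) (x (p (Suc j)))))"

lemma reach_le: "reach n x y i \<Longrightarrow> i \<le> n"
  unfolding reach_def by auto

lemma reach_0: "reach n x y 0"
  unfolding reach_def by (rule exI[of _ 0], rule exI[of _ "\<lambda>_. 0"]) auto

lemma reach_step:
  assumes "reach n x y a" "b \<le> n" "norm (y b - y a) = dist (x a) (x b)"
  shows "reach n x y b"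
proof -
  obtain k p where p: "p 0 = 0" "p k = a" "\<forall>j\<le>k. p j \<le> n"
    "\<forall>j<k. norm (y (p (Suc j)) - y (p j)) = dist (x (p j)) (x (p (Suc j)))"
    using assms(1) unfolding reach_def by blast
  define q where "q = p(Suc k := b)"
  have "q 0 = 0" "q (Suc k) = b" using p unfolding q_def by auto
  moreover have "\<forall>j\<le>Suc k. q j \<le> n" using p assms unfolding q_def by (auto simp: le_Suc_eq)
  moreover have "\<forall>j<Suc k. norm (y (q (Suc j)) - y (q j)) = dist (x (q j)) (x (q (Suc j)))"
  proof (intro allI impI)
    fix j assume "j < Suc k"
    then consider "j < k" | "j = k" by linarith
    then show "norm (y (q (Suc j)) - y (q j)) = dist (x (q j)) (x (q (Suc j)))"
      by cases (use p assms in \<open>auto simp: q_def\<close>)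
  qed
  ultimately show ?thesis unfolding reach_def by blast
qed

lemma reach_induct:
  assumes "reach n x y i" "P 0"
    "\<And>a b. P a \<Longrightarrow> a \<le> n \<Longrightarrow> b \<le> n \<Longrightarrow> norm (y b - y a) = dist (x a) (x b) \<Longrightarrow> P b"
  shows "P i"
proof -
  obtain k p where p: "p 0 = 0" "p k = i" "\<forall>j\<le>k. p j \<le> n"
    "\<forall>j<k. norm (y (p (Suc j)) - y (p j)) = dist (x (p j)) (x (p (Suc j)))"
    using assms(1) unfolding reach_def by blast
  have "\<forall>j\<le>m. P (p j)" if "m \<le> k" for m
    using that
  proof (induction m)
    case 0 then show ?case using p assms(2) by simp
  next
    case (Suc m)
    then have "P (p m)" by simp
    then have "P (p (Suc m))" using assms(3)[of "p m" "p (Suc m)"] p Suc.prems by auto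
    then show ?case using Suc by (auto simp: le_Suc_eq)
  qed
  then show ?thesis using p by auto
qed

lemma E_iff:
  "y \<in> E_set n x \<longleftrightarrow> y \<in> Lip10 n x \<and> (\<forall>i\<in>{1..n}. reach n x y i)"
proof
  assume "y \<in> E_set n x" then show "y \<in> Lip10 n x \<and> (\<forall>i\<in>{1..n}. reach n x y i)"
    unfolding E_set_def reach_def by blast
next
  assume a: "y \<in> Lip10 n x \<and> (\<forall>i\<in>{1..n}. reach n x y i)"
  have "\<exists>k\<ge>1. \<exists>p::nat \<Rightarrow> nat.
      p 0 = 0 \<and> p k = i \<and> (\<forall>j\<le>k. p j \<le> n) \<and>
      (\<forall>j<k. norm (y (p (Suc j)) - y (p j)) = dist (x (p j)) (x (p (Suc j))))" if i: "i \<in> {1..n}" for i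
  proof -
    obtain k p where p: "p 0 = 0" "p k = i" "\<forall>j\<le>k. p j \<le> n"
      "\<forall>j<k. norm (y (p (Suc j)) - y (p j)) = dist (x (p j)) (x (p (Suc j)))"
      using a i unfolding reach_def by blast
    have "k \<ge> 1" using p i by (cases k) auto
    then show ?thesis using p by blast
  qed
  then show "y \<in> E_set n x" using a unfolding E_set_def by blast
qed

lemma sc_scaled:
  fixes u v :: "'b::real_normed_vector"
  assumes sc: "strictly_convex_space TYPE('b)" and "norm u = D" "norm v = D" "u \<noteq> v" "D > 0"
  shows "norm ((1/2) *\<^sub>R (u + v)) < D"
proof -
  have "norm ((1/D) *\<^sub>R u) = 1" "norm ((1/D) *\<^sub>R v) = 1" using assms by auto
  moreover have "(1/D) *\<^sub>R u \<noteq> (1/D) *\<^sub>R v" using assms by auto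
  ultimately have "norm ((1/2) *\<^sub>R ((1/D) *\<^sub>R u + (1/D) *\<^sub>R v)) < 1"
    using sc unfolding strictly_convex_space_def by blast
  also have "(1/2) *\<^sub>R ((1/D) *\<^sub>R u + (1/D) *\<^sub>R v) = (1/D) *\<^sub>R ((1/2) *\<^sub>R (u + v))"
    by (simp add: algebra_simps)
  finally have "(1/D) * norm ((1/2) *\<^sub>R (u + v)) < 1" using \<open>D>0\<close> by simp
  then show ?thesis using \<open>D>0\<close> by (simp add: field_simps)
qed

lemma sc_main:
  fixes u v :: "'b::real_normed_vector"
  assumes sc: "strictly_convex_space TYPE('b)" and nu: "norm u \<le> D" and nv: "norm v \<le> D"
    and eq: "norm (l *\<^sub>R u + (1-l) *\<^sub>R v) = D" and l: "0 < l" "l < 1"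
  shows "u = v"
proof (rule ccontr)
  assume ne: "u \<noteq> v"
  have tri: "norm (l *\<^sub>R u + (1-l) *\<^sub>R v) \<le> l * norm u + (1-l) * norm v"
    using norm_triangle_ineq[of "l *\<^sub>R u" "(1-l) *\<^sub>R v"] l by simp
  have "norm u = D"
  proof (rule ccontr)
    assume "norm u \<noteq> D" then have "norm u < D" using nu by simp
    then have "l * norm u + (1-l) * norm v < l * D + (1-l) * D"
      using l nv by (intro add_less_le_mono) (auto intro: mult_left_mono)
    then show False using tri eq by (simp add: algebra_simps)
  qed
  have "norm v = D"
  proof (rule ccontr)
    assume "norm v \<noteq> D" then have "norm v < D" using nv by simp
    then have "l * norm u + (1-l) * norm v < l * D + (1-l) * D"
      using l nu by (intro add_le_less_mono) (auto intro: mult_left_mono)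
    then show False using tri eq by (simp add: algebra_simps)
  qed
  have "D > 0" using \<open>norm u = D\<close> \<open>norm v = D\<close> ne by (metis norm_le_zero_iff order_le_less nu norm_ge_zero)
  define m where "m = (1/2) *\<^sub>R (u + v)"
  have nm: "norm m < D" using sc_scaled[OF sc \<open>norm u = D\<close> \<open>norm v = D\<close> ne \<open>D>0\<close>] m_def by simp
  show False
  proof (cases "l \<ge> 1/2")
    case True
    have "l *\<^sub>R u + (1-l) *\<^sub>R v = (2*l-1) *\<^sub>R u + (2-2*l) *\<^sub>R m"
      unfolding m_def by (simp add: algebra_simps real_vector.scale_left_diff_distrib flip: scaleR_add_left)
    then have "D \<le> norm ((2*l-1) *\<^sub>R u) + norm ((2-2*l) *\<^sub>R m)"
      using eq norm_triangle_ineq by metis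
    also have "\<dots> = (2*l-1) * D + (2-2*l) * norm m" using True l \<open>norm u = D\<close> by simp
    also have "\<dots> < (2*l-1) * D + (2-2*l) * D" using nm l by simp
    finally show False by (simp add: algebra_simps)
  next
    case False
    have "l *\<^sub>R u + (1-l) *\<^sub>R v = (1-2*l) *\<^sub>R v + (2*l) *\<^sub>R m"
      unfolding m_def by (simp add: algebra_simps flip: scaleR_add_left)
    then have "D \<le> norm ((1-2*l) *\<^sub>R v) + norm ((2*l) *\<^sub>R m)"
      using eq norm_triangle_ineq by metis
    also have "\<dots> = (1-2*l) * D + (2*l) * norm m" using False l \<open>norm v = D\<close> by simp
    also have "\<dots> < (1-2*l) * D + (2*l) * D" using nm l by simp
    finally show False by (simp add: algebra_simps)
  qed
qed

theorem theorem1: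
  fixes n :: nat and x :: "nat \<Rightarrow> 'a::metric_space"
  assumes "n \<ge> 1"
    and "inj_on x {0..n}"
    and "\<exists>v::'b::banach. v \<noteq> 0"
    and "strictly_convex_space TYPE('b)"
  shows "ext_pts (Lip10 n x :: (nat \<Rightarrow> 'b) set) = E_set n x"
proof
  show "E_set n x \<subseteq> ext_pts (Lip10 n x :: (nat \<Rightarrow> 'b) set)"
  proof
    fix y :: "nat \<Rightarrow> 'b" assume yE: "y \<in> E_set n x"
    then have yL: "y \<in> Lip10 n x" and yR: "\<forall>i\<in>{1..n}. reach n x y i" by (auto simp: E_iff)
    have "y1 = y \<and> y2 = y" if y1: "y1 \<in> Lip10 n x" and y2: "y2 \<in> Lip10 n x" and l: "0 < l" "l < 1"
      and yeq: "y = (\<lambda>i. l *\<^sub>R y1 i + (1 - l) *\<^sub>R y2 i)" for y1 y2 l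
    proof -
      have P: "y1 i = y i \<and> y2 i = y i" if "reach n x y i" for i
        using that
      proof (rule reach_induct)
        show "y1 0 = y 0 \<and> y2 0 = y 0" using y1 y2 yL by (simp add: Lip10_def)
      next
        fix a b assume Pa: "y1 a = y a \<and> y2 a = y a" and ab: "a \<le> n" "b \<le> n"
          and t: "norm (y b - y a) = dist (x a) (x b)"
        have n1: "norm (y1 b - y1 a) \<le> dist (x a) (x b)"
          using y1 ab unfolding Lip10_def by (auto simp: dist_commute)
        have n2: "norm (y2 b - y2 a) \<le> dist (x a) (x b)"
          using y2 ab unfolding Lip10_def by (auto simp: dist_commute)
        have "l *\<^sub>R (y1 b - y1 a) + (1-l) *\<^sub>R (y2 b - y2 a) = y b - y a"
        proof -
          have ya: "y a = l *\<^sub>R y1 a + (1 - l) *\<^sub>R y2 a" and yb: "y b = l *\<^sub>R y1 b + (1 - l) *\<^sub>R y2 b"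
            using yeq by simp_all
          have "l *\<^sub>R (y1 b - y1 a) + (1-l) *\<^sub>R (y2 b - y2 a) = (l *\<^sub>R y1 b + (1 - l) *\<^sub>R y2 b) - (l *\<^sub>R y1 a + (1 - l) *\<^sub>R y2 a)"
            by (simp add: algebra_simps)
          also have "\<dots> = y b - y a" using ya yb by simp
          finally show ?thesis .
        qed
        then have "y1 b - y1 a = y2 b - y2 a"
          using sc_main[OF assms(4) n1 n2 _ l] t by simp
        then have "y1 b = y2 b" using Pa by simp
        moreover have "y b = l *\<^sub>R y1 b + (1 - l) *\<^sub>R y2 b" using yeq by simp
        ultimately show "y1 b = y b \<and> y2 b = y b" by (simp add: scaleR_collapse flip: scaleR_add_left)
      qed
      have "y1 i = y i \<and> y2 i = y i" for i
      proof -
        consider "i = 0" | "i \<in> {1..n}" | "i > n" by fastforce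
        then show ?thesis
        proof cases
          case 1 then show ?thesis using P reach_0 by blast
        next
          case 2 then show ?thesis using P yR by blast
        next
          case 3 then show ?thesis using y1 y2 yL by (simp add: Lip10_def)
        qed
      qed
      then show ?thesis by auto
    qed
    then show "y \<in> ext_pts (Lip10 n x)" using yL unfolding ext_pts_def by blast
  qed
next
  show "ext_pts (Lip10 n x :: (nat \<Rightarrow> 'b) set) \<subseteq> E_set n x"
  proof
    fix y :: "nat \<Rightarrow> 'b" assume ye: "y \<in> ext_pts (Lip10 n x)"
    then have yL: "y \<in> Lip10 n x" by (simp add: ext_pts_def)
    show "y \<in> E_set n x"
    proof (rule ccontr)
      assume "y \<notin> E_set n x"
      then obtain i where i: "i \<in> {1..n}" "\<not> reach n x y i" using yL by (auto simp: E_iff)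
      obtain v :: 'b where v: "v \<noteq> 0" using assms(3) by blast
      define S where "S = {(j,k). j \<le> n \<and> k \<le> n \<and> reach n x y j \<and> \<not> reach n x y k}"
      define gap where "gap = Min ((\<lambda>(j,k). dist (x j) (x k) - norm (y k - y j)) ` S)"
      have finS: "finite S" unfolding S_def
        by (rule finite_subset[of _ "{..n} \<times> {..n}"]) auto
      have "(0, i) \<in> S" using i reach_0 unfolding S_def by auto
      then have neS: "S \<noteq> {}" by auto
      have strict: "norm (y k - y j) < dist (x j) (x k)" if "(j,k) \<in> S" for j k
      proof -
        have jk: "j \<le> n" "k \<le> n" "reach n x y j" "\<not> reach n x y k" using that S_def by auto
        have "norm (y k - y j) \<le> dist (x j) (x k)" using yL jk unfolding Lip10_def
          by (auto simp: dist_commute)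
        moreover have "norm (y k - y j) \<noteq> dist (x j) (x k)" using reach_step[of n x y j k] jk by blast
        ultimately show ?thesis by simp
      qed
      have gpos: "gap > 0" unfolding gap_def using finS neS strict by (subst Min_gr_iff) auto
      have gle: "gap \<le> dist (x j) (x k) - norm (y k - y j)" if "(j,k) \<in> S" for j k
        unfolding gap_def using finS that by (intro Min_le) force+
      define w where "w = (gap / norm v) *\<^sub>R v"
      have nw: "norm w = gap" using v gpos by (simp add: w_def)
      define z where "z = (\<lambda>k. if k \<le> n \<and> \<not> reach n x y k then w else 0)"
      have Lz: "(\<lambda>k. y k + s *\<^sub>R z k) \<in> Lip10 n x" if s: "\<bar>s\<bar> = 1" for s
      proof -
        have "norm ((y i + s *\<^sub>R z i) - (y j + s *\<^sub>R z j)) \<le> dist (x i) (x j)"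
          if ij: "i \<le> n" "j \<le> n" for i j
        proof -
          have base: "norm (y i - y j) \<le> dist (x i) (x j)" using yL ij unfolding Lip10_def by auto
          consider "reach n x y i = reach n x y j" | "reach n x y i" "\<not> reach n x y j"
            | "\<not> reach n x y i" "reach n x y j" by blast
          then show ?thesis
          proof cases
            case 1 then show ?thesis using base ij by (auto simp: z_def)
          next
            case 2
            then have "(i,j) \<in> S" using ij S_def by auto
            then have g: "gap \<le> dist (x i) (x j) - norm (y j - y i)" using gle by blast
            have "(y i + s *\<^sub>R z i) - (y j + s *\<^sub>R z j) = (y i - y j) - s *\<^sub>R w"
              using 2 ij by (simp add: z_def)
            also have "norm \<dots> \<le> norm (y i - y j) + norm (s *\<^sub>R w)" by (rule norm_triangle_ineq4)
            also have "\<dots> = norm (y j - y i) + gap" using s nw by (simp add: norm_minus_commute)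
            finally show ?thesis using g by simp
          next
            case 3
            then have "(j,i) \<in> S" using ij S_def by auto
            then have g: "gap \<le> dist (x j) (x i) - norm (y i - y j)" using gle by blast
            have "(y i + s *\<^sub>R z i) - (y j + s *\<^sub>R z j) = (y i - y j) + s *\<^sub>R w"
              using 3 ij by (simp add: z_def)
            also have "norm \<dots> \<le> norm (y i - y j) + norm (s *\<^sub>R w)" by (rule norm_triangle_ineq)
            also have "\<dots> = norm (y i - y j) + gap" using s nw by simp
            finally show ?thesis using g by (simp add: dist_commute)
          qed
        qed
        moreover have "y 0 + s *\<^sub>R z 0 = 0" using yL reach_0[of n x y] by (simp add: Lip10_def z_def)
        moreover have "\<forall>i>n. y i + s *\<^sub>R z i = 0" using yL by (simp add: Lip10_def z_def)
        ultimately show ?thesis unfolding Lip10_def by blast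
      qed
      have L1: "(\<lambda>k. y k + z k) \<in> Lip10 n x" using Lz[of 1] by simp
      have L2: "(\<lambda>k. y k - z k) \<in> Lip10 n x" using Lz[of "-1"] by simp
      have yeq: "y = (\<lambda>k. (1/2::real) *\<^sub>R (y k + z k) + (1 - 1/2) *\<^sub>R (y k - z k))"
        by (simp add: fun_eq_iff algebra_simps scaleR_2[symmetric])
      have ex: "\<forall>y1\<in>Lip10 n x. \<forall>y2\<in>Lip10 n x. \<forall>l::real. 0 < l \<and> l < 1 \<and>
      y = (\<lambda>i. l *\<^sub>R y1 i + (1 - l) *\<^sub>R y2 i) \<longrightarrow> y1 = y \<and> y2 = y"
        using ye unfolding ext_pts_def by blast
      have "(\<lambda>k. y k + z k) = y" using ex[rule_format, OF L1 L2, of "1/2"] yeq by simp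
      then have "z i = 0" by (metis add_cancel_left_right)
      moreover have "w \<noteq> 0" using nw gpos by auto
      ultimately show False using i by (simp add: z_def)
    qed
  qed
qed

end
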